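(* Let $(X,d)$ be a complete metric space and $T\colon X\to X$ a mapping for which there exists $k<\kappa(X)$ with $$d(T^nx,T^ny)\le k\,D(x,o(y))$$ for all $n\in\mathbb N$ and all $(x,y)\in X\times X$ with $D(x,o(y))\le D(x,o(x))$. If some orbit of $T$ is bounded, then $T$ has a fixed point.
   Context: The orbit of $x$ under $T$ is $o(x)=\{x\}\cup\{T^nx:n\in\mathbb N\}$; for nonempty $C\subseteq X$, $D(x,C)=\sup\{d(x,y):y\in C\}$. $B(x,r)$ denotes the closed ball. For $c\ge1$, balls in $X$ are $c$-regular if for every $k'<c$ there are $\mu,\alpha\in(0,1)$ such that for all $x,y\in X$ and $r>0$ with $d(x,y)\ge(1-\mu)r$ there exists $z\in X$ with $B(x,(1+\mu)r)\cap B(y,k'(1+\mu)r)\subseteq B(z,\alpha r)$. The Lifschitz characteristic is $\kappa(X)=\sup\{c\ge1:\text{balls in }X\text{ are }c\text{-regular}\}$. *)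

theory Defs
  imports "HOL-Analysis.Analysis" "HOL-Library.Extended_Real"
begin

definition orbit :: "('a \<Rightarrow> 'a) \<Rightarrow> 'a \<Rightarrow> 'a set" where
  "orbit T x = {x} \<union> {(T ^^ n) x | n. n \<ge> 1}"

definition Dsup :: "'a::metric_space \<Rightarrow> 'a set \<Rightarrow> ereal" where
  "Dsup x C = Sup ((\<lambda>y. ereal (dist x y)) ` C)"

definition balls_regular :: "real \<Rightarrow> 'a::metric_space itself \<Rightarrow> bool" where
  "balls_regular c (_::'a itself) \<longleftrightarrow>
     (\<forall>k'. k' < c \<longrightarrow>
        (\<exists>\<mu> \<alpha>. 0 < \<mu> \<and> \<mu> < 1 \<and> 0 < \<alpha> \<and> \<alpha> < 1 \<and>
          (\<forall>(x::'a) y r. r > 0 \<and> dist x y \<ge> (1 - \<mu>) * r \<longrightarrow>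
             (\<exists>z. cball x ((1 + \<mu>) * r) \<inter> cball y (k' * (1 + \<mu>) * r) \<subseteq> cball z (\<alpha> * r)))))"

definition lifschitz_char :: "'a::metric_space itself \<Rightarrow> ereal" where
  "lifschitz_char t = Sup (ereal ` {c. c \<ge> 1 \<and> balls_regular c t})"

end

theory Submission
  imports Defs
begin

lemma orbit_range: "orbit T x = range (\<lambda>n. (T ^^ n) x)"
proof
  have "x \<in> range (\<lambda>n. (T ^^ n) x)" by (rule range_eqI[of _ _ 0]) simp
  then show "orbit T x \<subseteq> range (\<lambda>n. (T ^^ n) x)" unfolding orbit_def by blast
  show "range (\<lambda>n. (T ^^ n) x) \<subseteq> orbit T x"
  proof
    fix y assume "y \<in> range (\<lambda>n. (T ^^ n) x)"
    then obtain n where y: "y = (T ^^ n) x" by blast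
    show "y \<in> orbit T x"
    proof (cases "n = 0")
      case True then show ?thesis using y unfolding orbit_def by simp
    next
      case False then have "n \<ge> 1" by simp
      then show ?thesis using y unfolding orbit_def by blast
    qed
  qed
qed

lemma Dsup_le_iff: "Dsup x (orbit T y) \<le> ereal s \<longleftrightarrow> (\<forall>j. dist x ((T^^j) y) \<le> s)"
  unfolding Dsup_def orbit_range by (auto simp: SUP_le_iff)

lemma Dsup_ge: "ereal (dist x ((T^^j) y)) \<le> Dsup x (orbit T y)"
  unfolding Dsup_def orbit_range by (rule SUP_upper) auto

lemma Dsup_nonneg: "0 \<le> Dsup x (orbit T y)"
proof -
  have "(0::ereal) \<le> ereal (dist x ((T^^0) y))" by simp
  also have "\<dots> \<le> Dsup x (orbit T y)" by (rule Dsup_ge)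
  finally show ?thesis .
qed

lemma Dsup_mono_orbit: "Dsup x (orbit T ((T^^p) x)) \<le> Dsup x (orbit T x)"
  unfolding Dsup_def orbit_range image_image
proof (rule SUP_mono)
  fix n :: nat
  have "(T^^n) ((T^^p) x) = (T^^(n+p)) x" by (simp add: funpow_add)
  then show "\<exists>m\<in>UNIV. ereal (dist x ((T^^n) ((T^^p) x))) \<le> ereal (dist x ((T^^m) x))"
    by auto
qed

locale lif =
  fixes T :: "'a::metric_space \<Rightarrow> 'a" and k0 \<mu> \<alpha> :: real
  assumes k0: "k0 \<ge> 0" and mu: "0 < \<mu>" "\<mu> < 1" and al: "0 < \<alpha>" "\<alpha> < 1"
  and reg: "\<And>(x::'a) y r. r > 0 \<Longrightarrow> dist x y \<ge> (1-\<mu>)*r \<Longrightarrow>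
      \<exists>w. cball x ((1+\<mu>)*r) \<inter> cball y (k0*(1+\<mu>)*r) \<subseteq> cball w (\<alpha>*r)"
  and H: "\<And>n x y s. n \<ge> 1 \<Longrightarrow> (\<forall>j. dist x ((T^^j) y) \<le> s) \<Longrightarrow>
      Dsup x (orbit T y) \<le> Dsup x (orbit T x) \<Longrightarrow> dist ((T^^n) x) ((T^^n) y) \<le> k0 * s"
begin

definition A :: "'a \<Rightarrow> real set" where
  "A x = {s. \<exists>y N. \<forall>i\<ge>N. dist y ((T^^i) x) \<le> s}"

lemma Ha:
  assumes n: "n \<ge> 1" and a: "\<forall>j. dist x ((T^^j) x) \<le> s"
  shows "dist ((T^^n) x) ((T^^n) ((T^^p) x)) \<le> k0 * s"
proof (rule H[OF n])
  show "\<forall>j. dist x ((T^^j) ((T^^p) x)) \<le> s"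
  proof
    fix j
    have "(T^^j) ((T^^p) x) = (T^^(j+p)) x" by (simp add: funpow_add)
    then show "dist x ((T^^j) ((T^^p) x)) \<le> s" using a by simp
  qed
  show "Dsup x (orbit T ((T^^p) x)) \<le> Dsup x (orbit T x)" by (rule Dsup_mono_orbit)
qed

lemma Hb: "n \<ge> 1 \<Longrightarrow> (\<forall>j. dist x ((T^^j) y) \<le> s) \<Longrightarrow> s \<le> dist x ((T^^m) x) \<Longrightarrow>
   dist ((T^^n) x) ((T^^n) y) \<le> k0 * s"
proof (rule H)
  assume "\<forall>j. dist x ((T^^j) y) \<le> s" "s \<le> dist x ((T^^m) x)"
  then have "Dsup x (orbit T y) \<le> ereal s" by (simp add: Dsup_le_iff)
  also have "\<dots> \<le> ereal (dist x ((T^^m) x))" using \<open>s \<le> _\<close> by simp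
  also have "\<dots> \<le> Dsup x (orbit T x)" by (rule Dsup_ge)
  finally show "Dsup x (orbit T y) \<le> Dsup x (orbit T x)" .
qed

lemma A_props:
  assumes "\<forall>n. dist x ((T^^n) x) \<le> R"
  shows "R \<in> A x" "A x \<noteq> {}" "bdd_below (A x)" "0 \<le> Inf (A x)"
        "\<And>s. s \<in> A x \<Longrightarrow> Inf (A x) \<le> s"
proof -
  show "R \<in> A x" unfolding A_def using assms by blast
  then show ne: "A x \<noteq> {}" by blast
  have lo: "0 \<le> s" if sA: "s \<in> A x" for s
  proof -
    obtain y N where "\<forall>i\<ge>N. dist y ((T^^i) x) \<le> s" using sA unfolding A_def by blast
    then have "dist y ((T^^N) x) \<le> s" by simp
    then show ?thesis using zero_le_dist[of y "(T^^N) x"] by linarith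
  qed
  then show bdd: "bdd_below (A x)" unfolding bdd_below_def by blast
  show "0 \<le> Inf (A x)" using ne lo by (rule cInf_greatest)
  show "\<And>s. s \<in> A x \<Longrightarrow> Inf (A x) \<le> s" by (rule cInf_lower[OF _ bdd])
qed

lemma lemma1:
  assumes R: "\<forall>n. dist x ((T^^n) x) \<le> R"
  shows "Inf (A x) \<le> R / (1+\<mu>)"
proof (rule ccontr)
  define r where "r = Inf (A x)"
  assume "\<not> Inf (A x) \<le> R / (1+\<mu>)"
  then have rR: "R < (1+\<mu>)*r" using mu unfolding r_def by (simp add: field_simps)
  have r0: "r \<ge> 0" using A_props[OF R] r_def by simp
  have Rge: "R \<ge> 0" using R[rule_format, of 0] by simp
  have "(1+\<mu>)*r > 0" using rR Rge by linarith
  then have rpos: "r > 0" using mu by (simp add: zero_less_mult_iff)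
  have small: "dist x ((T^^m) x) < (1-\<mu>)*r" for m
  proof (cases "m = 0")
    case True then show ?thesis using rpos mu by simp
  next
    case False
    show ?thesis
    proof (rule ccontr)
      assume "\<not> ?thesis"
      then have "dist x ((T^^m) x) \<ge> (1-\<mu>)*r" by simp
      then obtain w where w: "cball x ((1+\<mu>)*r) \<inter> cball ((T^^m) x) (k0*(1+\<mu>)*r) \<subseteq> cball w (\<alpha>*r)"
        using reg rpos by blast
      have "\<forall>i\<ge>m. dist w ((T^^i) x) \<le> \<alpha>*r"
      proof (intro allI impI)
        fix i assume "i \<ge> m"
        then have "i = m + (i-m)" by simp
        then have ii: "(T^^i) x = (T^^m) ((T^^(i-m)) x)"
          by (metis funpow_add o_apply)
        have "dist ((T^^m) x) ((T^^i) x) \<le> k0 * R"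
          unfolding ii using Ha[of m x R "i-m"] R False by simp
        also have "\<dots> \<le> k0*((1+\<mu>)*r)" using k0 rR by (intro mult_left_mono) auto
        finally have "(T^^i) x \<in> cball ((T^^m) x) (k0*(1+\<mu>)*r)" by simp
        moreover have "(T^^i) x \<in> cball x ((1+\<mu>)*r)"
        proof -
          have "dist x ((T^^i) x) \<le> R" using R by blast
          then show ?thesis using rR by simp
        qed
        ultimately show "dist w ((T^^i) x) \<le> \<alpha>*r" using w by auto
      qed
      then have "\<alpha>*r \<in> A x" unfolding A_def by blast
      then have "r \<le> \<alpha>*r" using A_props[OF R] r_def by simp
      then show False using rpos al by simp
    qed
  qed
  then have "\<forall>i\<ge>0. dist x ((T^^i) x) \<le> (1-\<mu>)*r" using less_imp_le by blast
  then have "(1-\<mu>)*r \<in> A x" unfolding A_def by blast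
  then have "r \<le> (1-\<mu>)*r" using A_props[OF R] r_def by simp
  then show False using rpos mu by simp
qed


lemma step:
  assumes R: "\<forall>n. dist x ((T^^n) x) \<le> R" and Rpos: "R > 0"
  defines "\<beta> \<equiv> (1+\<mu>/2)/(1+\<mu>)"
  shows "\<exists>z. (\<forall>n. dist z ((T^^n) z) \<le> \<beta>*R) \<and> dist x z \<le> 2*R"
proof -
  define r where "r = Inf (A x)"
  have r0: "r \<ge> 0" and rl: "\<And>s. s \<in> A x \<Longrightarrow> r \<le> s" and ne: "A x \<noteq> {}" and bdd: "bdd_below (A x)"
    using A_props[OF R] r_def by auto
  have rR: "r \<le> R/(1+\<mu>)" using lemma1[OF R] r_def by simp
  have b1: "\<beta> < 1" "0 < \<beta>" using mu unfolding \<beta>_def by (auto simp: field_simps)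
  have b2: "(1+\<mu>/2)*r \<le> \<beta>*R"
  proof -
    have "(1+\<mu>/2)*r \<le> (1+\<mu>/2)*(R/(1+\<mu>))" using rR mu by (intro mult_left_mono) auto
    then show ?thesis unfolding \<beta>_def by simp
  qed
  have b3: "r \<le> \<beta>*R"
  proof -
    have "r \<le> (1+\<mu>/2)*r" using r0 mu by (simp add: algebra_simps)
    then show ?thesis using b2 by simp
  qed
  define b where "b = (if r > 0 then (1+\<mu>/2)*r else \<beta>*R/(1+k0))"
  have "r < b" unfolding b_def using r0 mu b1 Rpos k0 by (auto simp: field_simps)
  then obtain s where sA: "s \<in> A x" and sb: "s < b"
    using cInf_less_iff[OF ne bdd] r_def by auto
  then obtain z N where zN: "\<forall>i\<ge>N. dist z ((T^^i) x) \<le> s" unfolding A_def by blast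
  have s0: "0 \<le> s" using sA A_props(5)[OF R] A_props(4)[OF R] by fastforce
  have sbR: "s < \<beta>*R"
  proof (cases "r > 0")
    case True then show ?thesis using sb b2 b_def by simp
  next
    case False
    then have "s < \<beta>*R/(1+k0)" using sb b_def by simp
    also have "\<dots> \<le> \<beta>*R" using k0 b1 Rpos by (simp add: field_simps mult_left_mono)
    finally show ?thesis .
  qed
  have dxz: "dist x z \<le> 2*R"
  proof -
    have "dist x z \<le> dist x ((T^^N) x) + dist z ((T^^N) x)" by (rule dist_triangle2)
    also have "\<dots> \<le> R + s" using R zN by (intro add_mono) auto
    moreover have "\<beta>*R < R" using b1 Rpos by simp
    ultimately show ?thesis using sbR by linarith
  qed
  show ?thesis
  proof (cases "\<forall>m. dist z ((T^^m) z) \<le> s")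
    case True
    have "\<forall>n. dist z ((T^^n) z) \<le> \<beta>*R"
    proof
      fix n show "dist z ((T^^n) z) \<le> \<beta>*R" using True[rule_format, of n] sbR by linarith
    qed
    then show ?thesis using dxz by blast
  next
    case False
    then obtain m0 where "\<not> dist z ((T^^m0) z) \<le> s" by blast
    then have m0: "s \<le> dist z ((T^^m0) z)" by simp
    have clos: "dist ((T^^n) z) ((T^^n) ((T^^j) x)) \<le> k0 * s" if "1 \<le> n" and "N \<le> j" for n j :: nat
    proof (rule Hb[OF that(1) _ m0], intro allI)
      fix i
      have "(T^^i) ((T^^j) x) = (T^^(i+j)) x" by (simp add: funpow_add)
      then show "dist z ((T^^i) ((T^^j) x)) \<le> s" using zN that(2) by simp
    qed
    show ?thesis
    proof (cases "r > 0")
      case False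
      have "dist z ((T^^n) z) \<le> (1+k0) * s" for n
      proof (cases "n = 0")
        case True then show ?thesis using s0 k0 by simp
      next
        case False
        have e: "(T^^(n+N)) x = (T^^n) ((T^^N) x)" by (simp add: funpow_add)
        have "dist z ((T^^n) z) \<le> dist z ((T^^(n+N)) x) + dist ((T^^n) z) ((T^^(n+N)) x)"
          by (rule dist_triangle2)
        also have "\<dots> \<le> s + k0 * s" unfolding e
          using zN clos[of n N] False by (intro add_mono) (auto simp: e[symmetric])
        finally show ?thesis by (simp add: algebra_simps)
      qed
      moreover have "(1+k0) * s \<le> \<beta>*R"
      proof -
        have "s < \<beta>*R/(1+k0)" using sb b_def False by simp
        then show ?thesis using k0 by (simp add: field_simps)
      qed
      ultimately have "\<forall>n. dist z ((T^^n) z) \<le> \<beta>*R" by (blast intro: order_trans)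
      then show ?thesis using dxz by blast
    next
      case True
      have small: "dist z ((T^^m) z) \<le> (1-\<mu>)*r" for m
      proof (cases "m = 0")
        case True then show ?thesis using r0 mu by simp
      next
        case mpos: False
        show ?thesis
        proof (rule ccontr)
          assume "\<not> ?thesis"
          then have dd: "dist z ((T^^m) z) \<ge> (1-\<mu>)*r" by simp
          obtain w where w: "cball z ((1+\<mu>)*r) \<inter> cball ((T^^m) z) (k0*(1+\<mu>)*r) \<subseteq> cball w (\<alpha>*r)"
            using reg[of r z "(T^^m) z"] True dd by blast
          have sr: "s \<le> (1+\<mu>)*r"
          proof -
            have "(1+\<mu>/2)*r \<le> (1+\<mu>)*r" using True mu by (intro mult_right_mono) auto
            moreover have "s < (1+\<mu>/2)*r" using sb b_def True by simp
            ultimately show ?thesis by linarith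
          qed
          have "\<forall>i\<ge>m+N. dist w ((T^^i) x) \<le> \<alpha>*r"
          proof (intro allI impI)
            fix i assume i: "i \<ge> m+N"
            then have "i = m + (i-m)" by simp
            then have ii: "(T^^i) x = (T^^m) ((T^^(i-m)) x)"
              by (metis funpow_add o_apply)
            have "dist ((T^^m) z) ((T^^i) x) \<le> k0 * s"
              unfolding ii using clos[of m "i-m"] mpos i by simp
            also have "\<dots> \<le> k0*((1+\<mu>)*r)" using k0 sr by (rule mult_left_mono[rotated])
            finally have "(T^^i) x \<in> cball ((T^^m) z) (k0*(1+\<mu>)*r)" by simp
            moreover have "(T^^i) x \<in> cball z ((1+\<mu>)*r)"
            proof -
              have "dist z ((T^^i) x) \<le> s" using zN i by simp
              then show ?thesis using sr by simp
            qed
            ultimately show "dist w ((T^^i) x) \<le> \<alpha>*r" using w by auto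
          qed
          then have "\<alpha>*r \<in> A x" unfolding A_def by blast
          then have "r \<le> \<alpha>*r" using rl by simp
          then show False using True al by simp
        qed
      qed
      have "(1-\<mu>)*r \<le> r" using mu r0 by (simp add: algebra_simps)
      then have "(1-\<mu>)*r \<le> \<beta>*R" using b3 by linarith
      then have "\<forall>n. dist z ((T^^n) z) \<le> \<beta>*R" using small by (blast intro: order_trans)
      then show ?thesis using dxz by blast
    qed
  qed
qed

end

lemma lif_fixed:
  fixes T :: "'a::complete_space \<Rightarrow> 'a"
  assumes L: "lif T k0 \<mu> \<alpha>"
    and x0: "\<forall>n. dist x0 ((T^^n) x0) \<le> R0" and R0: "R0 > 0"
  shows "\<exists>x. T x = x"
proof -
  interpret lif T k0 \<mu> \<alpha> by (rule L)
  define \<beta> where "\<beta> = (1+\<mu>/2)/(1+\<mu>)"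
  have b1: "\<beta> < 1" "0 < \<beta>" using mu unfolding \<beta>_def by (auto simp: field_simps)
  define g where "g = (\<lambda>i x. SOME z. (\<forall>n. dist z ((T^^n) z) \<le> \<beta>*(\<beta>^i*R0)) \<and> dist x z \<le> 2*(\<beta>^i*R0))"
  define xs where "xs = rec_nat x0 g"
  have xs0: "xs 0 = x0" and xsS: "\<And>i. xs (Suc i) = g i (xs i)" unfolding xs_def by auto
  have P: "\<forall>n. dist (xs i) ((T^^n) (xs i)) \<le> \<beta>^i*R0" for i
  proof (induction i)
    case 0 then show ?case using x0 xs0 by simp
  next
    case (Suc i)
    have "\<exists>z. (\<forall>n. dist z ((T^^n) z) \<le> \<beta>*(\<beta>^i*R0)) \<and> dist (xs i) z \<le> 2*(\<beta>^i*R0)"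
      using step[OF Suc] R0 b1 unfolding \<beta>_def by simp
    then have "(\<forall>n. dist (xs (Suc i)) ((T^^n) (xs (Suc i))) \<le> \<beta>*(\<beta>^i*R0))"
      unfolding xsS g_def by (rule someI2_ex) auto
    then show ?case by (simp add: mult.assoc)
  qed
  have D: "dist (xs i) (xs (Suc i)) \<le> 2*(\<beta>^i*R0)" for i
  proof -
    have "\<exists>z. (\<forall>n. dist z ((T^^n) z) \<le> \<beta>*(\<beta>^i*R0)) \<and> dist (xs i) z \<le> 2*(\<beta>^i*R0)"
      using step[OF P[of i]] R0 b1 unfolding \<beta>_def by simp
    then show ?thesis unfolding xsS g_def by (rule someI2_ex) auto
  qed
  define C where "C = 2*R0/(1-\<beta>)"
  have C0: "C \<ge> 0" using R0 b1 unfolding C_def by simp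
  have Db: "dist (xs m) (xs (m+d)) \<le> C*(\<beta>^m - \<beta>^(m+d))" for m d
  proof (induction d)
    case 0 then show ?case by simp
  next
    case (Suc d)
    have "dist (xs m) (xs (m + Suc d)) \<le> dist (xs m) (xs (m+d)) + dist (xs (m+d)) (xs (Suc (m+d)))"
      by (simp add: dist_triangle)
    also have "\<dots> \<le> C*(\<beta>^m - \<beta>^(m+d)) + 2*(\<beta>^(m+d)*R0)" using Suc D by (intro add_mono) auto
    also have "\<dots> = C*(\<beta>^m - \<beta>^(m + Suc d))"
      using b1 unfolding C_def by (simp add: field_simps)
    finally show ?case .
  qed
  have Db2: "dist (xs m) (xs n) \<le> C*\<beta>^m" if "m \<le> n" for m n
  proof -
    obtain d where n: "n = m + d" using \<open>m \<le> n\<close> le_Suc_ex by blast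
    have "C*(\<beta>^m - \<beta>^(m+d)) \<le> C*\<beta>^m" using C0 b1 by (simp add: mult_left_mono)
    then show ?thesis using Db[of m d] n by simp
  qed
  have bz: "(\<lambda>i. \<beta>^i) \<longlonglongrightarrow> 0" using b1 by (intro LIMSEQ_power_zero) auto
  have "Cauchy xs"
  proof (unfold Cauchy_def, intro allI impI)
    fix e :: real assume e: "e > 0"
    have "(\<lambda>i. C*\<beta>^i) \<longlonglongrightarrow> C*0" by (intro tendsto_mult bz tendsto_const)
    then have "eventually (\<lambda>i. C*\<beta>^i < e/2) sequentially" using e
      by (intro order_tendstoD) auto
    then obtain M where M: "C*\<beta>^M < e/2" by (auto simp: eventually_sequentially)
    show "\<exists>M. \<forall>m\<ge>M. \<forall>n\<ge>M. dist (xs m) (xs n) < e"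
    proof (intro exI allI impI)
      fix m n assume "M \<le> m" "M \<le> n"
      then have "dist (xs m) (xs n) \<le> dist (xs M) (xs m) + dist (xs M) (xs n)"
        by (simp add: dist_triangle3)
      also have "\<dots> \<le> C*\<beta>^M + C*\<beta>^M" using Db2 \<open>M \<le> m\<close> \<open>M \<le> n\<close> by (intro add_mono) auto
      finally show "dist (xs m) (xs n) < e" using M by simp
    qed
  qed
  then have "convergent xs" by (simp add: Cauchy_convergent_iff)
  then obtain p where p: "xs \<longlonglongrightarrow> p" unfolding convergent_def by blast
  show ?thesis
  proof (rule ccontr)
    assume nf: "\<not> ?thesis"
    define \<delta> where "\<delta> = dist p (T p)"
    have d0: "\<delta> > 0" using nf unfolding \<delta>_def by (metis zero_less_dist_iff)
    define e where "e = \<delta> / (2*(1+k0)+2)"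
    have e0: "e > 0" using d0 k0 unfolding e_def by simp
    have "eventually (\<lambda>i. dist (xs i) p < e) sequentially" using p e0 by (rule tendstoD)
    moreover have "eventually (\<lambda>i. \<beta>^i*R0 < e) sequentially"
    proof -
      have "(\<lambda>i. \<beta>^i*R0) \<longlonglongrightarrow> 0*R0" by (intro tendsto_mult bz tendsto_const)
      then show ?thesis using e0 by (intro order_tendstoD) auto
    qed
    ultimately have "eventually (\<lambda>i. dist (xs i) p < e \<and> \<beta>^i*R0 < e) sequentially"
      by (rule eventually_conj)
    then obtain N where "\<forall>i\<ge>N. dist (xs i) p < e \<and> \<beta>^i*R0 < e"
      unfolding eventually_sequentially by blast
    then obtain i where i1: "dist (xs i) p < e" and i2: "\<beta>^i*R0 < e" by blast
    define s where "s = dist p (xs i) + \<beta>^i*R0"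
    have s2: "s < 2*e" using i1 i2 unfolding s_def by (simp add: dist_commute)
    have "(1+k0)*(2*e) \<le> \<delta>" using d0 k0 unfolding e_def by (simp add: field_simps)
    moreover have "(1+k0)* s < (1+k0)*(2*e)" using s2 k0 by (intro mult_strict_left_mono) auto
    ultimately have ks: "(1+k0)* s < \<delta>" by linarith
    have s0: "s \<ge> 0" unfolding s_def using R0 b1 by simp
    have "s \<le> (1+k0)* s" using k0 s0 by (simp add: algebra_simps)
    then have sd: "s \<le> \<delta>" using ks by linarith
    have sj: "\<forall>j. dist p ((T^^j) (xs i)) \<le> s"
    proof
      fix j
      have "dist p ((T^^j) (xs i)) \<le> dist p (xs i) + dist (xs i) ((T^^j) (xs i))" by (rule dist_triangle)
      moreover have "dist (xs i) ((T^^j) (xs i)) \<le> \<beta>^i*R0" using P[of i] by blast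
      ultimately show "dist p ((T^^j) (xs i)) \<le> s" unfolding s_def by linarith
    qed
    have "dist ((T^^1) p) ((T^^1) (xs i)) \<le> k0 * s"
      by (rule Hb[of 1 p "xs i" s 1]) (use sj sd in \<open>auto simp: \<delta>_def\<close>)
    then have h1: "dist (T p) (T (xs i)) \<le> k0 * s" by simp
    have h2: "dist (xs i) (T (xs i)) \<le> \<beta>^i*R0" using P[of i, rule_format, of 1] by simp
    have "\<delta> \<le> dist p (xs i) + dist (xs i) (T (xs i)) + dist (T (xs i)) (T p)"
      unfolding \<delta>_def using dist_triangle[of p "T p" "xs i"] dist_triangle[of "xs i" "T p" "T (xs i)"]
      by linarith
    also have "\<dots> \<le> s + k0 * s" using h1 h2 unfolding s_def by (simp add: dist_commute)
    finally show False using ks by (simp add: algebra_simps)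
  qed
qed

theorem corollary4p5:
  fixes T :: "'a::complete_space \<Rightarrow> 'a" and k :: real
  assumes "ereal k < lifschitz_char TYPE('a)"
    and "\<And>n x y. n \<ge> 1 \<Longrightarrow> Dsup x (orbit T y) \<le> Dsup x (orbit T x) \<Longrightarrow>
           ereal (dist ((T ^^ n) x) ((T ^^ n) y)) \<le> ereal k * Dsup x (orbit T y)"
    and "\<exists>x0. bounded (orbit T x0)"
  shows "\<exists>x. T x = x"
proof -
  have "\<exists>x\<in>ereal ` {c. c \<ge> 1 \<and> balls_regular c TYPE('a)}. ereal k < x"
    using assms(1) unfolding lifschitz_char_def by (simp only: less_Sup_iff)
  then obtain c where cS: "c \<in> {c. c \<ge> 1 \<and> balls_regular c TYPE('a)}" and kc': "ereal k < ereal c"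
    by blast
  have c1: "c \<ge> 1" and creg: "balls_regular c TYPE('a)" using cS by auto
  have kc: "k < c" using kc' by simp
  define k0 where "k0 = max k 0"
  have k0c: "k0 < c" using kc c1 unfolding k0_def by simp
  have "k0 < c \<longrightarrow> (\<exists>\<mu> \<alpha>. 0 < \<mu> \<and> \<mu> < 1 \<and> 0 < \<alpha> \<and> \<alpha> < 1 \<and>
          (\<forall>(x::'a) y r. r > 0 \<and> dist x y \<ge> (1 - \<mu>) * r \<longrightarrow>
             (\<exists>z. cball x ((1 + \<mu>) * r) \<inter> cball y (k0 * (1 + \<mu>) * r) \<subseteq> cball z (\<alpha> * r))))"
    using creg unfolding balls_regular_def by (rule spec)
  then have "\<exists>\<mu> \<alpha>. 0 < \<mu> \<and> \<mu> < 1 \<and> 0 < \<alpha> \<and> \<alpha> < 1 \<and>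
          (\<forall>(x::'a) y r. r > 0 \<and> dist x y \<ge> (1 - \<mu>) * r \<longrightarrow>
             (\<exists>z. cball x ((1 + \<mu>) * r) \<inter> cball y (k0 * (1 + \<mu>) * r) \<subseteq> cball z (\<alpha> * r)))"
    using k0c by (rule mp)
  then obtain \<mu> \<alpha> where mu: "0 < \<mu>" "\<mu> < 1" and al: "0 < \<alpha>" "\<alpha> < 1"
    and reg: "\<forall>(x::'a) y r. r > 0 \<and> dist x y \<ge> (1 - \<mu>) * r \<longrightarrow>
             (\<exists>z. cball x ((1 + \<mu>) * r) \<inter> cball y (k0 * (1 + \<mu>) * r) \<subseteq> cball z (\<alpha> * r))"
    by (elim exE conjE)
  have H: "dist ((T^^n) x) ((T^^n) y) \<le> k0 * s"
    if n: "n \<ge> 1" and sj: "\<forall>j. dist x ((T^^j) y) \<le> s" and cd: "Dsup x (orbit T y) \<le> Dsup x (orbit T x)"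
    for n x y s
  proof -
    have Ds: "Dsup x (orbit T y) \<le> ereal s" using sj by (simp add: Dsup_le_iff)
    have D0: "0 \<le> Dsup x (orbit T y)" by (rule Dsup_nonneg)
    obtain d where d: "Dsup x (orbit T y) = ereal d"
      using Ds D0 by (cases "Dsup x (orbit T y)") auto
    have d0: "0 \<le> d" and ds: "d \<le> s" using Ds D0 d by auto
    have "ereal (dist ((T ^^ n) x) ((T ^^ n) y)) \<le> ereal (k * d)"
      using assms(2)[OF n cd] d by simp
    then have "dist ((T ^^ n) x) ((T ^^ n) y) \<le> k * d" by simp
    also have "\<dots> \<le> k0 * d" using d0 unfolding k0_def by (intro mult_right_mono) auto
    also have "\<dots> \<le> k0 * s" using ds unfolding k0_def by (intro mult_left_mono) auto
    finally show ?thesis .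
  qed
  have k00: "k0 \<ge> 0" unfolding k0_def by simp
  have L: "lif T k0 \<mu> \<alpha>"
  proof (rule lif.intro)
    show "0 \<le> k0" by (rule k00)
    show "0 < \<mu>" "\<mu> < 1" "0 < \<alpha>" "\<alpha> < 1" by (rule mu(1), rule mu(2), rule al(1), rule al(2))
    show "\<exists>w. cball x ((1+\<mu>)*r) \<inter> cball y (k0*(1+\<mu>)*r) \<subseteq> cball w (\<alpha>*r)"
      if "r > 0" "dist x y \<ge> (1-\<mu>)*r" for x y :: 'a and r
      using reg that by simp
    show "dist ((T^^n) x) ((T^^n) y) \<le> k0 * s"
      if "n \<ge> 1" "\<forall>j. dist x ((T^^j) y) \<le> s" "Dsup x (orbit T y) \<le> Dsup x (orbit T x)" for n x y s
      using H that by blast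
  qed
  obtain x0 where bx: "bounded (orbit T x0)" using assms(3) by blast
  then obtain e where e: "\<forall>y\<in>orbit T x0. dist x0 y \<le> e" using bounded_any_center by blast
  have "\<forall>n. dist x0 ((T^^n) x0) \<le> max e 1"
  proof
    fix n
    have "dist x0 ((T^^n) x0) \<le> e" using e unfolding orbit_range by blast
    then show "dist x0 ((T^^n) x0) \<le> max e 1" by simp
  qed
  moreover have "max e 1 > (0::real)" by simp
  ultimately show ?thesis by (rule lif_fixed[OF L])
qed

end
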